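(* Let $\mathcal{C}$ be a category and let $\mathbf{Ff}_{\mathcal{C}}$ be the category of functorial factorisations on $\mathcal{C}$, equipped with the two strict monoidal structures $(\otimes, I)$ and $(\odot,\bot)$ described below. Then $(\mathbf{Ff}_{\mathcal{C}}, \otimes, I, \odot, \bot)$ can be made into a strict 2-fold monoidal category, i.e. there exist maps $m\colon \bot\otimes\bot\to\bot$, $c\colon I\to I\odot I$, $j\colon I\to \bot$ making $(\bot,j,m)$ a $\otimes$-monoid and $(I,j,c)$ a $\odot$-comonoid, and a family of maps $z_{A,B,C,D}\colon (A\odot B)\otimes(C\odot D)\to (A\otimes C)\odot(B\otimes D)$ natural in $A,B,C,D$, satisfying the coherence laws of a strict 2-fold monoidal category.
   Context: $\mathcal{C}^{\mathbf 2}$ denotes the arrow category of $\mathcal{C}$: objects are morphisms $f\colon X\to Y$ of $\mathcal{C}$; a morphism $(h,k)\colon f\to g$ (with $g\colon W\to Z$) is a pair $h\colon X\to W$, $k\colon Y\to Z$ with $gh=kf$. $\mathrm{dom},\mathrm{cod}\colon \mathcal{C}^{\mathbf 2}\to\mathcal{C}$ are the domain and codomain functors and $\kappa\colon\mathrm{dom}\Rightarrow\mathrm{cod}$ has $\kappa_f=f$. A functorial factorisation $(E,\lambda,\rho)$ is a functor $E\colon\mathcal{C}^{\mathbf 2}\to\mathcal{C}$ with natural transformations $\lambda\colon\mathrm{dom}\Rightarrow E$, $\rho\colon E\Rightarrow\mathrm{cod}$ such that $\rho_f\lambda_f=f$ for all $f$; so $f\colon X\to Y$ factors as $X\xrightarrow{\lambda_f}Ef\xrightarrow{\rho_f}Y$.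 A morphism $\alpha\colon(E,\lambda,\rho)\to(E',\lambda',\rho')$ in $\mathbf{Ff}_{\mathcal{C}}$ is a natural transformation $\alpha\colon E\Rightarrow E'$ with $\alpha\lambda=\lambda'$ and $\rho'\alpha=\rho$. The tensor $(E',\lambda',\rho')\otimes(E,\lambda,\rho)$ factorises $f$ as $X\xrightarrow{\lambda'_{\rho_f}\lambda_f}E'(\rho_f)\xrightarrow{\rho'_{\rho_f}}Y$; its unit $I=(\mathrm{dom},1_{\mathrm{dom}},\kappa)$ (the initial object of $\mathbf{Ff}_{\mathcal{C}}$). The tensor $(E',\lambda',\rho')\odot(E,\lambda,\rho)$ factorises $f$ as $X\xrightarrow{\lambda'_{\lambda_f}}E'(\lambda_f)\xrightarrow{\rho_f\rho'_{\lambda_f}}Y$; its unit is $\bot=(\mathrm{cod},\kappa,1_{\mathrm{cod}})$ (the terminal object). On morphisms $\alpha\colon(E,\lambda,\rho)\to(F,\mu,\nu)$, $\beta\colon(E',\lambda',\rho')\to(F',\mu',\nu')$: $(\beta\otimes\alpha)_f=\beta_{\nu_f}\circ E'(\alpha_f,1_Y)$ and $(\beta\odot\alpha)_f=\beta_{\mu_f}\circ E'(1_X,\alpha_f)$. A strict 2-fold monoidal category is a monoid in the category of strict monoidal categories and lax monoidal functors; explicitly it is a category with two strict monoidal structures and data $m,c,j,z$ as in the claim, subject to six coherence laws equating the two canonical composites $(A\odot B\odot C)\otimes(A'\odot B'\odot C')\to(A\otimes A')\odot(B\otimes B')\odot(C\otimes C')$, $(A\odot A')\otimes(B\odot B')\otimes(C\odot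 C')\to(A\otimes B\otimes C)\odot(A'\otimes B'\otimes C')$, $(A\odot B)\otimes I\to(A\otimes I)\odot(B\otimes I)$, $I\otimes(A\odot B)\to(I\otimes A)\odot(I\otimes B)$, $(\bot\odot A)\otimes(\bot\odot B)\to\bot\odot(A\otimes B)$, $(A\odot\bot)\otimes(B\odot\bot)\to(A\otimes B)\odot\bot$. *)

theory Defs
  imports Main
begin

record ('o, 'm) cat =
  cOb   :: "'o set"
  cAr   :: "'m set"
  cdom  :: "'m \<Rightarrow> 'o"
  ccod  :: "'m \<Rightarrow> 'o"
  cid   :: "'o \<Rightarrow> 'm"
  ccomp :: "'m \<Rightarrow> 'm \<Rightarrow> 'm"   (* ccomp C g f  =  g \<circ> f *)

definition chom :: "('o, 'm) cat \<Rightarrow> 'o \<Rightarrow> 'o \<Rightarrow> 'm set" where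
  "chom C a b = {f \<in> cAr C. cdom C f = a \<and> ccod C f = b}"

definition is_category :: "('o, 'm) cat \<Rightarrow> bool" where
  "is_category C \<longleftrightarrow>
     (\<forall>f \<in> cAr C. cdom C f \<in> cOb C \<and> ccod C f \<in> cOb C) \<and>
     (\<forall>a \<in> cOb C. cid C a \<in> chom C a a) \<and>
     (\<forall>f \<in> cAr C. \<forall>g \<in> cAr C. ccod C f = cdom C g \<longrightarrow>
        ccomp C g f \<in> chom C (cdom C f) (ccod C g)) \<and>
     (\<forall>f \<in> cAr C. ccomp C f (cid C (cdom C f)) = f \<and> ccomp C (cid C (ccod C f)) f = f) \<and>
     (\<forall>f \<in> cAr C. \<forall>g \<in> cAr C. \<forall>h \<in> cAr C.
        ccod C f = cdom C g \<longrightarrow> ccod C g = cdom C h \<longrightarrow>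
        ccomp C h (ccomp C g f) = ccomp C (ccomp C h g) f)"

text \<open>A morphism (h,k) : f \<rightarrow> g of the arrow category: a commutative square g h = k f.\<close>
definition is_sq :: "('o, 'm) cat \<Rightarrow> 'm \<Rightarrow> 'm \<Rightarrow> 'm \<Rightarrow> 'm \<Rightarrow> bool" where
  "is_sq C f g h k \<longleftrightarrow> f \<in> cAr C \<and> g \<in> cAr C \<and>
     h \<in> chom C (cdom C f) (cdom C g) \<and> k \<in> chom C (ccod C f) (ccod C g) \<and>
     ccomp C g h = ccomp C k f"

text \<open>fE F f = E f (object part), fEm F f g h k = E(h,k) : E f \<rightarrow> E g for (h,k) : f \<rightarrow> g,
  flam F f = lambda_f, frho F f = rho_f.\<close>
record ('o, 'm) ff =
  fE   :: "'m \<Rightarrow> 'o"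
  fEm  :: "'m \<Rightarrow> 'm \<Rightarrow> 'm \<Rightarrow> 'm \<Rightarrow> 'm"
  flam :: "'m \<Rightarrow> 'm"
  frho :: "'m \<Rightarrow> 'm"

definition is_ff :: "('o, 'm) cat \<Rightarrow> ('o, 'm) ff \<Rightarrow> bool" where
  "is_ff C F \<longleftrightarrow>
     (\<forall>f \<in> cAr C. fE F f \<in> cOb C \<and>
        flam F f \<in> chom C (cdom C f) (fE F f) \<and>
        frho F f \<in> chom C (fE F f) (ccod C f) \<and>
        ccomp C (frho F f) (flam F f) = f) \<and>
     (\<forall>f g h k. is_sq C f g h k \<longrightarrow>
        fEm F f g h k \<in> chom C (fE F f) (fE F g) \<and>
        ccomp C (fEm F f g h k) (flam F f) = ccomp C (flam F g) h \<and>
        ccomp C (frho F g) (fEm F f g h k) = ccomp C k (frho F f)) \<and>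
     (\<forall>f \<in> cAr C. fEm F f f (cid C (cdom C f)) (cid C (ccod C f)) = cid C (fE F f)) \<and>
     (\<forall>f g l h k h' k'. is_sq C f g h k \<longrightarrow> is_sq C g l h' k' \<longrightarrow>
        fEm F f l (ccomp C h' h) (ccomp C k' k) = ccomp C (fEm F g l h' k') (fEm F f g h k))"

text \<open>Morphisms of Ff_C: natural transformations alpha : E \<Rightarrow> E' with alpha lambda = lambda',
  rho' alpha = rho.  Only the components at arrows of C matter.\<close>
definition is_ff_hom :: "('o, 'm) cat \<Rightarrow> ('o, 'm) ff \<Rightarrow> ('o, 'm) ff \<Rightarrow> ('m \<Rightarrow> 'm) \<Rightarrow> bool" where
  "is_ff_hom C F G \<alpha> \<longleftrightarrow>
     (\<forall>f \<in> cAr C. \<alpha> f \<in> chom C (fE F f) (fE G f) \<and>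
        ccomp C (\<alpha> f) (flam F f) = flam G f \<and>
        ccomp C (frho G f) (\<alpha> f) = frho F f) \<and>
     (\<forall>f g h k. is_sq C f g h k \<longrightarrow>
        ccomp C (\<alpha> g) (fEm F f g h k) = ccomp C (fEm G f g h k) (\<alpha> f))"

definition ff_id :: "('o, 'm) cat \<Rightarrow> ('o, 'm) ff \<Rightarrow> 'm \<Rightarrow> 'm" where
  "ff_id C F = (\<lambda>f. cid C (fE F f))"

definition ff_comp :: "('o, 'm) cat \<Rightarrow> ('m \<Rightarrow> 'm) \<Rightarrow> ('m \<Rightarrow> 'm) \<Rightarrow> 'm \<Rightarrow> 'm" where
  "ff_comp C \<beta> \<alpha> = (\<lambda>f. ccomp C (\<beta> f) (\<alpha> f))"

definition ff_eq :: "('o, 'm) cat \<Rightarrow> ('m \<Rightarrow> 'm) \<Rightarrow> ('m \<Rightarrow> 'm) \<Rightarrow> bool" where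
  "ff_eq C \<alpha> \<beta> \<longleftrightarrow> (\<forall>f \<in> cAr C. \<alpha> f = \<beta> f)"

text \<open>ff_tens C F' F = F' \<otimes> F: f = rho'_{rho_f} \<circ> (lambda'_{rho_f} \<circ> lambda_f).\<close>
definition ff_tens :: "('o, 'm) cat \<Rightarrow> ('o, 'm) ff \<Rightarrow> ('o, 'm) ff \<Rightarrow> ('o, 'm) ff" where
  "ff_tens C F' F =
     \<lparr> fE = (\<lambda>f. fE F' (frho F f)),
       fEm = (\<lambda>f g h k. fEm F' (frho F f) (frho F g) (fEm F f g h k) k),
       flam = (\<lambda>f. ccomp C (flam F' (frho F f)) (flam F f)),
       frho = (\<lambda>f. frho F' (frho F f)) \<rparr>"

definition ff_I :: "('o, 'm) cat \<Rightarrow> ('o, 'm) ff" where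
  "ff_I C = \<lparr> fE = cdom C, fEm = (\<lambda>f g h k. h), flam = (\<lambda>f. cid C (cdom C f)), frho = (\<lambda>f. f) \<rparr>"

text \<open>ff_odot C F' F = F' \<odot> F: f = (rho_f \<circ> rho'_{lambda_f}) \<circ> lambda'_{lambda_f}.\<close>
definition ff_odot :: "('o, 'm) cat \<Rightarrow> ('o, 'm) ff \<Rightarrow> ('o, 'm) ff \<Rightarrow> ('o, 'm) ff" where
  "ff_odot C F' F =
     \<lparr> fE = (\<lambda>f. fE F' (flam F f)),
       fEm = (\<lambda>f g h k. fEm F' (flam F f) (flam F g) h (fEm F f g h k)),
       flam = (\<lambda>f. flam F' (flam F f)),
       frho = (\<lambda>f. ccomp C (frho F f) (frho F' (flam F f))) \<rparr>"

definition ff_bot :: "('o, 'm) cat \<Rightarrow> ('o, 'm) ff" where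
  "ff_bot C = \<lparr> fE = ccod C, fEm = (\<lambda>f g h k. k), flam = (\<lambda>f. f), frho = (\<lambda>f. cid C (ccod C f)) \<rparr>"

text \<open>For beta : E' \<rightarrow> F' and alpha : E \<rightarrow> F (with F = (F,mu,nu)):
  (beta \<otimes> alpha)_f = beta_{nu_f} \<circ> E'(alpha_f, 1_Y),
  (beta \<odot> alpha)_f = beta_{mu_f} \<circ> E'(1_X, alpha_f).\<close>
definition ff_tens_m :: "('o, 'm) cat \<Rightarrow> ('o, 'm) ff \<Rightarrow> ('o, 'm) ff \<Rightarrow> ('o, 'm) ff \<Rightarrow>
    ('m \<Rightarrow> 'm) \<Rightarrow> ('m \<Rightarrow> 'm) \<Rightarrow> 'm \<Rightarrow> 'm" where
  "ff_tens_m C E' E F \<beta> \<alpha> =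
     (\<lambda>f. ccomp C (\<beta> (frho F f)) (fEm E' (frho E f) (frho F f) (\<alpha> f) (cid C (ccod C f))))"

definition ff_odot_m :: "('o, 'm) cat \<Rightarrow> ('o, 'm) ff \<Rightarrow> ('o, 'm) ff \<Rightarrow> ('o, 'm) ff \<Rightarrow>
    ('m \<Rightarrow> 'm) \<Rightarrow> ('m \<Rightarrow> 'm) \<Rightarrow> 'm \<Rightarrow> 'm" where
  "ff_odot_m C E' E F \<beta> \<alpha> =
     (\<lambda>f. ccomp C (\<beta> (flam F f)) (fEm E' (flam E f) (flam F f) (cid C (cdom C f)) (\<alpha> f)))"

text \<open>(bot, j, m) is a \<otimes>-monoid (using I \<otimes> bot = bot = bot \<otimes> I strictly).\<close>
definition tens_monoid :: "('o, 'm) cat \<Rightarrow> ('m \<Rightarrow> 'm) \<Rightarrow> ('m \<Rightarrow> 'm) \<Rightarrow> bool" where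
  "tens_monoid C j m \<longleftrightarrow>
    (let B = ff_bot C; I = ff_I C; BB = ff_tens C B B in
     is_ff_hom C I B j \<and> is_ff_hom C BB B m \<and>
     ff_eq C (ff_comp C m (ff_tens_m C BB B B m (ff_id C B)))
             (ff_comp C m (ff_tens_m C B BB B (ff_id C B) m)) \<and>
     ff_eq C (ff_comp C m (ff_tens_m C I B B j (ff_id C B))) (ff_id C B) \<and>
     ff_eq C (ff_comp C m (ff_tens_m C B I B (ff_id C B) j)) (ff_id C B))"

text \<open>(I, j, c) is a \<odot>-comonoid (using I \<odot> bot = I = bot \<odot> I strictly).\<close>
definition odot_comonoid :: "('o, 'm) cat \<Rightarrow> ('m \<Rightarrow> 'm) \<Rightarrow> ('m \<Rightarrow> 'm) \<Rightarrow> bool" where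
  "odot_comonoid C j c \<longleftrightarrow>
    (let B = ff_bot C; I = ff_I C; II = ff_odot C I I in
     is_ff_hom C I B j \<and> is_ff_hom C I II c \<and>
     ff_eq C (ff_comp C (ff_odot_m C I I I c (ff_id C I)) c)
             (ff_comp C (ff_odot_m C I I II (ff_id C I) c) c) \<and>
     ff_eq C (ff_comp C (ff_odot_m C I I I j (ff_id C I)) c) (ff_id C I) \<and>
     ff_eq C (ff_comp C (ff_odot_m C I I B (ff_id C I) j) c) (ff_id C I))"

definition z_typed :: "('o, 'm) cat \<Rightarrow>
    (('o, 'm) ff \<Rightarrow> ('o, 'm) ff \<Rightarrow> ('o, 'm) ff \<Rightarrow> ('o, 'm) ff \<Rightarrow> 'm \<Rightarrow> 'm) \<Rightarrow> bool" where
  "z_typed C z \<longleftrightarrow>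
    (\<forall>A B X Y. is_ff C A \<longrightarrow> is_ff C B \<longrightarrow> is_ff C X \<longrightarrow> is_ff C Y \<longrightarrow>
       is_ff_hom C (ff_tens C (ff_odot C A B) (ff_odot C X Y))
                   (ff_odot C (ff_tens C A X) (ff_tens C B Y)) (z A B X Y))"

definition z_natural :: "('o, 'm) cat \<Rightarrow>
    (('o, 'm) ff \<Rightarrow> ('o, 'm) ff \<Rightarrow> ('o, 'm) ff \<Rightarrow> ('o, 'm) ff \<Rightarrow> 'm \<Rightarrow> 'm) \<Rightarrow> bool" where
  "z_natural C z \<longleftrightarrow>
    (\<forall>A B X Y A' B' X' Y' a b x y.
       is_ff C A \<longrightarrow> is_ff C B \<longrightarrow> is_ff C X \<longrightarrow> is_ff C Y \<longrightarrow>
       is_ff C A' \<longrightarrow> is_ff C B' \<longrightarrow> is_ff C X' \<longrightarrow> is_ff C Y' \<longrightarrow>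
       is_ff_hom C A A' a \<longrightarrow> is_ff_hom C B B' b \<longrightarrow>
       is_ff_hom C X X' x \<longrightarrow> is_ff_hom C Y Y' y \<longrightarrow>
       ff_eq C
         (ff_comp C (ff_odot_m C (ff_tens C A X) (ff_tens C B Y) (ff_tens C B' Y')
                       (ff_tens_m C A X X' a x) (ff_tens_m C B Y Y' b y))
                    (z A B X Y))
         (ff_comp C (z A' B' X' Y')
                    (ff_tens_m C (ff_odot C A B) (ff_odot C X Y) (ff_odot C X' Y')
                       (ff_odot_m C A B B' a b) (ff_odot_m C X Y Y' x y))))"

definition z_coherent :: "('o, 'm) cat \<Rightarrow> ('m \<Rightarrow> 'm) \<Rightarrow> ('m \<Rightarrow> 'm) \<Rightarrow>
    (('o, 'm) ff \<Rightarrow> ('o, 'm) ff \<Rightarrow> ('o, 'm) ff \<Rightarrow> ('o, 'm) ff \<Rightarrow> 'm \<Rightarrow> 'm) \<Rightarrow> bool" where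
  "z_coherent C m c z \<longleftrightarrow>
    (let I = ff_I C; Bt = ff_bot C;
         tn = ff_tens C; od = ff_odot C; tm = ff_tens_m C; om = ff_odot_m C; idm = ff_id C;
         cmp = ff_comp C in
    \<comment> \<open>(A\<odot>B\<odot>C)\<otimes>(A'\<odot>B'\<odot>C') \<rightarrow> (A\<otimes>A')\<odot>(B\<otimes>B')\<odot>(C\<otimes>C')\<close>
    (\<forall>A B D A' B' D'. is_ff C A \<longrightarrow> is_ff C B \<longrightarrow> is_ff C D \<longrightarrow>
        is_ff C A' \<longrightarrow> is_ff C B' \<longrightarrow> is_ff C D' \<longrightarrow>
      ff_eq C
        (cmp (om (tn (od A B) (od A' B')) (tn D D') (tn D D') (z A B A' B') (idm (tn D D')))
             (z (od A B) D (od A' B') D'))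
        (cmp (om (tn A A') (tn (od B D) (od B' D')) (od (tn B B') (tn D D'))
                 (idm (tn A A')) (z B D B' D'))
             (z A (od B D) A' (od B' D')))) \<and>
    \<comment> \<open>(A\<odot>A')\<otimes>(B\<odot>B')\<otimes>(C\<odot>C') \<rightarrow> (A\<otimes>B\<otimes>C)\<odot>(A'\<otimes>B'\<otimes>C')\<close>
    (\<forall>A B D A' B' D'. is_ff C A \<longrightarrow> is_ff C B \<longrightarrow> is_ff C D \<longrightarrow>
        is_ff C A' \<longrightarrow> is_ff C B' \<longrightarrow> is_ff C D' \<longrightarrow>
      ff_eq C
        (cmp (z (tn A B) (tn A' B') D D')
             (tm (tn (od A A') (od B B')) (od D D') (od D D') (z A A' B B') (idm (od D D'))))
        (cmp (z A A' (tn B D) (tn B' D'))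
             (tm (od A A') (tn (od B B') (od D D')) (od (tn B D) (tn B' D'))
                 (idm (od A A')) (z B B' D D')))) \<and>
    \<comment> \<open>(A\<odot>B)\<otimes>I \<rightarrow> (A\<otimes>I)\<odot>(B\<otimes>I)\<close>
    (\<forall>A B. is_ff C A \<longrightarrow> is_ff C B \<longrightarrow>
      ff_eq C (cmp (z A B I I) (tm (od A B) I (od I I) (idm (od A B)) c))
              (idm (tn (od A B) I))) \<and>
    \<comment> \<open>I\<otimes>(A\<odot>B) \<rightarrow> (I\<otimes>A)\<odot>(I\<otimes>B)\<close>
    (\<forall>A B. is_ff C A \<longrightarrow> is_ff C B \<longrightarrow>
      ff_eq C (cmp (z I I A B) (tm I (od A B) (od A B) c (idm (od A B))))
              (idm (tn I (od A B)))) \<and>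
    \<comment> \<open>(\<bottom>\<odot>A)\<otimes>(\<bottom>\<odot>B) \<rightarrow> \<bottom>\<odot>(A\<otimes>B)\<close>
    (\<forall>A B. is_ff C A \<longrightarrow> is_ff C B \<longrightarrow>
      ff_eq C (cmp (om (tn Bt Bt) (tn A B) (tn A B) m (idm (tn A B))) (z Bt A Bt B))
              (idm (tn (od Bt A) (od Bt B)))) \<and>
    \<comment> \<open>(A\<odot>\<bottom>)\<otimes>(B\<odot>\<bottom>) \<rightarrow> (A\<otimes>B)\<odot>\<bottom>\<close>
    (\<forall>A B. is_ff C A \<longrightarrow> is_ff C B \<longrightarrow>
      ff_eq C (cmp (om (tn A B) (tn Bt Bt) Bt (idm (tn A B)) m) (z A Bt B Bt))
              (idm (tn (od A Bt) (od B Bt)))))"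

end

theory Submission
  imports Defs
begin


locale catx =
  fixes C :: "('o, 'm) cat"
  assumes is_cat: "is_category C"
begin

abbreviation arr where "arr f \<equiv> f \<in> cAr C"
abbreviation dm where "dm \<equiv> cdom C"
abbreviation cd where "cd \<equiv> ccod C"
abbreviation cp (infixr "\<cdot>" 55) where "g \<cdot> f \<equiv> ccomp C g f"
abbreviation ide where "ide \<equiv> cid C"

definition T where "T f = (if arr f then Some (dm f, cd f) else None)"
definition JT where "JT f = T f"
definition JD where "JD f = dm f"
definition JC where "JC f = cd f"

lemma arr_T: "arr x = (T x \<noteq> None)" by (simp add: T_def)
lemma dm_T: "dm x = (case T x of None \<Rightarrow> JD x | Some p \<Rightarrow> fst p)" by (simp add: T_def JD_def)
lemma cd_T: "cd x = (case T x of None \<Rightarrow> JC x | Some p \<Rightarrow> snd p)" by (simp add: T_def JC_def)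

lemma ob_dom: "arr f \<Longrightarrow> dm f \<in> cOb C"
  using is_cat unfolding is_category_def by blast
lemma ob_cod: "arr f \<Longrightarrow> cd f \<in> cOb C"
  using is_cat unfolding is_category_def by blast
lemma id_arr: "a \<in> cOb C \<Longrightarrow> arr (ide a)"
  and id_dom: "a \<in> cOb C \<Longrightarrow> dm (ide a) = a"
  and id_cod: "a \<in> cOb C \<Longrightarrow> cd (ide a) = a"
  using is_cat unfolding is_category_def chom_def by blast+
lemma comp_arr: "arr f \<Longrightarrow> arr g \<Longrightarrow> cd f = dm g \<Longrightarrow> arr (g \<cdot> f)"
  and comp_dom: "arr f \<Longrightarrow> arr g \<Longrightarrow> cd f = dm g \<Longrightarrow> dm (g \<cdot> f) = dm f"
  and comp_cod: "arr f \<Longrightarrow> arr g \<Longrightarrow> cd f = dm g \<Longrightarrow> cd (g \<cdot> f) = cd g"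
  using is_cat unfolding is_category_def chom_def by blast+

lemma T_comp[simp]: "T (g \<cdot> f) = (case T f of None \<Rightarrow> JT (g \<cdot> f) | Some (a,b) \<Rightarrow>
   (case T g of None \<Rightarrow> JT (g \<cdot> f) | Some (b',c) \<Rightarrow> if b = b' then Some (a,c) else JT (g \<cdot> f)))"
  by (auto simp: T_def JT_def comp_arr comp_dom comp_cod split: option.split)
lemma T_id[simp]: "T (ide a) = (if a \<in> cOb C then Some (a,a) else JT (ide a))"
  by (auto simp: T_def JT_def id_arr id_dom id_cod)
lemma T_some: "T f = Some (a, b) \<longleftrightarrow> arr f \<and> dm f = a \<and> cd f = b"
  by (auto simp: T_def)

lemmas Tsimps = arr_T dm_T cd_T

lemma ob_T: "T f = Some (a, b) \<Longrightarrow> a \<in> cOb C \<and> b \<in> cOb C"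
  by (auto simp: T_some ob_dom ob_cod)

lemma comp_id_r[simp]: "arr f \<Longrightarrow> dm f = a \<Longrightarrow> f \<cdot> ide a = f"
  using is_cat unfolding is_category_def by blast
lemma comp_id_l[simp]: "arr f \<Longrightarrow> cd f = a \<Longrightarrow> ide a \<cdot> f = f"
  using is_cat unfolding is_category_def by blast
lemma comp_assoc[simp]: "arr f \<Longrightarrow> arr g \<Longrightarrow> arr h \<Longrightarrow> cd f = dm g \<Longrightarrow> cd g = dm h \<Longrightarrow>
   (h \<cdot> g) \<cdot> f = h \<cdot> (g \<cdot> f)"
  using is_cat unfolding is_category_def by metis
lemma comp_id_l'[simp]: "arr f \<Longrightarrow> cd f = a \<Longrightarrow> arr x \<Longrightarrow> cd x = dm f \<Longrightarrow> ide a \<cdot> (f \<cdot> x) = f \<cdot> x"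
  by (simp add: comp_arr comp_dom comp_cod)

definition sq where "sq f g h k \<longleftrightarrow> arr f \<and> arr g \<and> arr h \<and> arr k \<and> dm h = dm f \<and> cd h = dm g
   \<and> dm k = cd f \<and> cd k = cd g \<and> g \<cdot> h = k \<cdot> f"

lemma is_sq_eq: "is_sq C f g h k = sq f g h k"
  unfolding is_sq_def sq_def chom_def by auto

context fixes F assumes F: "is_ff C F"
begin
lemma ff_ob: "arr f \<Longrightarrow> fE F f \<in> cOb C"
  and lam_arr: "arr f \<Longrightarrow> arr (flam F f)"
  and lam_dom: "arr f \<Longrightarrow> dm (flam F f) = dm f"
  and lam_cod: "arr f \<Longrightarrow> cd (flam F f) = fE F f"
  and rho_arr: "arr f \<Longrightarrow> arr (frho F f)"
  and rho_dom: "arr f \<Longrightarrow> dm (frho F f) = fE F f"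
  and rho_cod: "arr f \<Longrightarrow> cd (frho F f) = cd f"
  and rho_lam: "arr f \<Longrightarrow> frho F f \<cdot> flam F f = f"
  using F unfolding is_ff_def chom_def by blast+
lemma Em_arr: "sq f g h k \<Longrightarrow> arr (fEm F f g h k)"
  and Em_dom: "sq f g h k \<Longrightarrow> dm (fEm F f g h k) = fE F f"
  and Em_cod: "sq f g h k \<Longrightarrow> cd (fEm F f g h k) = fE F g"
  and Em_lam: "sq f g h k \<Longrightarrow> fEm F f g h k \<cdot> flam F f = flam F g \<cdot> h"
  and rho_Em: "sq f g h k \<Longrightarrow> frho F g \<cdot> fEm F f g h k = k \<cdot> frho F f"
  using F unfolding is_ff_def chom_def is_sq_eq by blast+
lemma Em_id: "arr f \<Longrightarrow> a = dm f \<Longrightarrow> b = cd f \<Longrightarrow> fEm F f f (ide a) (ide b) = ide (fE F f)"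
  using F unfolding is_ff_def by blast
lemma Em_comp: "sq f g h k \<Longrightarrow> sq g l h' k' \<Longrightarrow>
   fEm F g l h' k' \<cdot> fEm F f g h k = fEm F f l (h' \<cdot> h) (k' \<cdot> k)"
  using F unfolding is_ff_def is_sq_eq by metis
end

lemma T_lam[simp]: "is_ff C F \<Longrightarrow> T (flam F f) = (case T f of None \<Rightarrow> JT (flam F f) | Some (a,b) \<Rightarrow> Some (a, fE F f))"
  by (auto simp: T_def JT_def lam_arr lam_dom lam_cod split: option.split)
lemma T_rho[simp]: "is_ff C F \<Longrightarrow> T (frho F f) = (case T f of None \<Rightarrow> JT (frho F f) | Some (a,b) \<Rightarrow> Some (fE F f, b))"
  by (auto simp: T_def JT_def rho_arr rho_dom rho_cod split: option.split)
lemma T_Em[simp]: "is_ff C F \<Longrightarrow> T (fEm F f g h k) = (if sq f g h k then Some (fE F f, fE F g) else JT (fEm F f g h k))"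
  by (auto simp: T_def JT_def Em_arr Em_dom Em_cod)
lemma ob_E[simp]: "is_ff C F \<Longrightarrow> arr f \<Longrightarrow> fE F f \<in> cOb C"
  by (rule ff_ob)

lemma sq_simp[simp]: "sq f g h k \<longleftrightarrow> arr f \<and> arr g \<and> arr h \<and> arr k \<and> dm h = dm f \<and> cd h = dm g
   \<and> dm k = cd f \<and> cd k = cd g \<and> g \<cdot> h = k \<cdot> f"
  by (simp add: sq_def)

declare Tsimps[simp]

lemma rho_lam_s[simp]: "is_ff C F \<Longrightarrow> arr f \<Longrightarrow> frho F f \<cdot> flam F f = f"
  by (rule rho_lam)
lemma rho_lam'[simp]: "is_ff C F \<Longrightarrow> arr f \<Longrightarrow> arr x \<Longrightarrow> cd x = dm f \<Longrightarrow> frho F f \<cdot> (flam F f \<cdot> x) = f \<cdot> x"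
  by (subst comp_assoc[symmetric]) (simp_all del: Tsimps add: lam_arr lam_dom lam_cod rho_arr rho_dom rho_lam)
lemma Em_lam_s[simp]: "is_ff C F \<Longrightarrow> sq f g h k \<Longrightarrow> fEm F f g h k \<cdot> flam F f = flam F g \<cdot> h"
  by (rule Em_lam) (simp_all del: sq_simp)
lemma rho_Em_s[simp]: "is_ff C F \<Longrightarrow> sq f g h k \<Longrightarrow> frho F g \<cdot> fEm F f g h k = k \<cdot> frho F f"
  by (rule rho_Em) (simp_all del: sq_simp)
lemma Em_id_s[simp]: "is_ff C F \<Longrightarrow> arr f \<Longrightarrow> a = dm f \<Longrightarrow> b = cd f \<Longrightarrow> fEm F f f (ide a) (ide b) = ide (fE F f)"
  by (rule Em_id)
lemma Em_comp_s[simp]: "is_ff C F \<Longrightarrow> sq f g h k \<Longrightarrow> sq g l h' k' \<Longrightarrow>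
   fEm F g l h' k' \<cdot> fEm F f g h k = fEm F f l (h' \<cdot> h) (k' \<cdot> k)"
  by (rule Em_comp) (simp_all del: sq_simp)

lemma assoc_helper: "arr f \<Longrightarrow> arr g \<Longrightarrow> arr x \<Longrightarrow> cd x = dm f \<Longrightarrow> cd f = dm g \<Longrightarrow> g \<cdot> f = e \<Longrightarrow> g \<cdot> (f \<cdot> x) = e \<cdot> x"
  using comp_assoc by (metis)

lemma Em_lam'[simp]: "is_ff C F \<Longrightarrow> sq f g h k \<Longrightarrow> arr x \<Longrightarrow> cd x = dm f \<Longrightarrow>
   fEm F f g h k \<cdot> (flam F f \<cdot> x) = flam F g \<cdot> (h \<cdot> x)"
  apply (subst assoc_helper[where e="flam F g \<cdot> h"])
  apply (simp_all del: Tsimps sq_simp add: sq_def lam_arr lam_dom lam_cod Em_arr Em_dom Em_cod Em_lam comp_arr comp_dom comp_cod)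
  done

lemma rho_Em'[simp]: "is_ff C F \<Longrightarrow> sq f g h k \<Longrightarrow> arr x \<Longrightarrow> cd x = fE F f \<Longrightarrow>
   frho F g \<cdot> (fEm F f g h k \<cdot> x) = k \<cdot> (frho F f \<cdot> x)"
  apply (subst assoc_helper[where e="k \<cdot> frho F f"])
  apply (simp_all del: Tsimps sq_simp add: sq_def rho_arr rho_dom rho_cod Em_arr Em_dom Em_cod rho_Em comp_arr comp_dom comp_cod)
  done
lemma Em_comp'[simp]: "is_ff C F \<Longrightarrow> sq f g h k \<Longrightarrow> sq g l h' k' \<Longrightarrow> arr x \<Longrightarrow> cd x = fE F f \<Longrightarrow>
   fEm F g l h' k' \<cdot> (fEm F f g h k \<cdot> x) = fEm F f l (h' \<cdot> h) (k' \<cdot> k) \<cdot> x"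
  apply (subst assoc_helper[where e="fEm F f l (h' \<cdot> h) (k' \<cdot> k)"])
  apply (simp_all del: Tsimps sq_simp add: Em_arr Em_dom Em_cod Em_comp)
  done

context fixes F G \<alpha> assumes F: "is_ff C F" and G: "is_ff C G" and H: "is_ff_hom C F G \<alpha>"
begin
lemma hom_arr: "arr f \<Longrightarrow> arr (\<alpha> f)"
  and hom_dom: "arr f \<Longrightarrow> dm (\<alpha> f) = fE F f"
  and hom_cod: "arr f \<Longrightarrow> cd (\<alpha> f) = fE G f"
  and hom_lam: "arr f \<Longrightarrow> \<alpha> f \<cdot> flam F f = flam G f"
  and hom_rho: "arr f \<Longrightarrow> frho G f \<cdot> \<alpha> f = frho F f"
  using H unfolding is_ff_hom_def chom_def by blast+
lemma hom_nat: "sq f g h k \<Longrightarrow> \<alpha> g \<cdot> fEm F f g h k = fEm G f g h k \<cdot> \<alpha> f"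
  using H unfolding is_ff_hom_def is_sq_eq by blast
lemma T_hom: "T (\<alpha> f) = (case T f of None \<Rightarrow> JT (\<alpha> f) | Some _ \<Rightarrow> Some (fE F f, fE G f))"
  by (auto simp del: Tsimps simp: T_def JT_def hom_arr hom_dom hom_cod split: option.split)
lemma hom_lam_s: "arr f \<Longrightarrow> \<alpha> f \<cdot> flam F f = flam G f" by (rule hom_lam) (simp del: Tsimps)
lemma hom_rho_s: "arr f \<Longrightarrow> frho G f \<cdot> \<alpha> f = frho F f" by (rule hom_rho) (simp del: Tsimps)
lemma hom_nat_s: "sq f g h k \<Longrightarrow> \<alpha> g \<cdot> fEm F f g h k = fEm G f g h k \<cdot> \<alpha> f" by (rule hom_nat) (simp del: sq_simp)
lemma hom_lam': "arr f \<Longrightarrow> arr x \<Longrightarrow> cd x = dm f \<Longrightarrow> \<alpha> f \<cdot> (flam F f \<cdot> x) = flam G f \<cdot> x"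
  using F G
  apply (subst assoc_helper[where e="flam G f"])
  apply (simp_all del: Tsimps sq_simp add: lam_arr lam_dom lam_cod hom_arr hom_dom hom_cod hom_lam)
  done
lemma hom_rho': "arr f \<Longrightarrow> arr x \<Longrightarrow> cd x = fE F f \<Longrightarrow> frho G f \<cdot> (\<alpha> f \<cdot> x) = frho F f \<cdot> x"
  using F G
  apply (subst assoc_helper[where e="frho F f"])
  apply (simp_all del: Tsimps sq_simp add: rho_arr rho_dom rho_cod hom_arr hom_dom hom_cod hom_rho)
  done
lemma hom_nat': "sq f g h k \<Longrightarrow> arr x \<Longrightarrow> cd x = fE F f \<Longrightarrow>
   \<alpha> g \<cdot> (fEm F f g h k \<cdot> x) = fEm G f g h k \<cdot> (\<alpha> f \<cdot> x)"
proof -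
  assume a: "sq f g h k" "arr x" "cd x = fE F f"
  hence s: "arr f" "arr g" unfolding sq_def by auto
  note r = Em_arr[OF F a(1)] Em_dom[OF F a(1)] Em_cod[OF F a(1)] Em_arr[OF G a(1)] Em_dom[OF G a(1)] Em_cod[OF G a(1)]
     hom_arr[OF s(1)] hom_dom[OF s(1)] hom_cod[OF s(1)] hom_arr[OF s(2)] hom_dom[OF s(2)] hom_cod[OF s(2)]
  have "\<alpha> g \<cdot> (fEm F f g h k \<cdot> x) = (\<alpha> g \<cdot> fEm F f g h k) \<cdot> x"
    using a r by (subst comp_assoc) (simp_all del: Tsimps sq_simp)
  also have "\<dots> = (fEm G f g h k \<cdot> \<alpha> f) \<cdot> x" using a hom_nat by (simp del: Tsimps sq_simp)
  also have "\<dots> = fEm G f g h k \<cdot> (\<alpha> f \<cdot> x)"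
    using a r by (subst comp_assoc) (simp_all del: Tsimps sq_simp)
  finally show ?thesis .
qed
end

lemmas hom_simps = T_hom hom_lam_s hom_rho_s hom_nat_s hom_lam' hom_rho' hom_nat'

lemmas ff_defs = ff_tens_def ff_odot_def ff_I_def ff_bot_def ff_tens_m_def ff_odot_m_def
   ff_id_def ff_comp_def ff_eq_def is_sq_eq Let_def

lemma arr_T_some: "arr f \<Longrightarrow> \<exists>P Q. T f = Some (P, Q)" by (simp del: Tsimps add: T_def)


lemma sq_T: "is_sq C f g h k \<Longrightarrow> \<exists>P Q P' Q'. T f = Some (P,Q) \<and> T g = Some (P',Q') \<and> T h = Some (P,P') \<and> T k = Some (Q,Q') \<and> g \<cdot> h = k \<cdot> f"
  by (simp del: Tsimps add: T_def is_sq_def chom_def)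

lemma arrE: "arr f \<Longrightarrow> (\<And>P Q. T f = Some (P,Q) \<Longrightarrow> P \<in> cOb C \<Longrightarrow> Q \<in> cOb C \<Longrightarrow> R) \<Longrightarrow> R"
proof -
  assume a: "arr f" and r: "\<And>P Q. T f = Some (P,Q) \<Longrightarrow> P \<in> cOb C \<Longrightarrow> Q \<in> cOb C \<Longrightarrow> R"
  from arr_T_some[OF a] obtain P Q where o: "T f = Some (P,Q)" by (elim exE)
  show R by (rule r[OF o conjunct1[OF ob_T[OF o]] conjunct2[OF ob_T[OF o]]])
qed
lemma sqE: "is_sq C f g h k \<Longrightarrow> (\<And>P Q P' Q'. T f = Some (P,Q) \<Longrightarrow> T g = Some (P',Q') \<Longrightarrow> T h = Some (P,P') \<Longrightarrow> T k = Some (Q,Q') \<Longrightarrow> g \<cdot> h = k \<cdot> f \<Longrightarrow>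
   P \<in> cOb C \<Longrightarrow> Q \<in> cOb C \<Longrightarrow> P' \<in> cOb C \<Longrightarrow> Q' \<in> cOb C \<Longrightarrow> R) \<Longrightarrow> R"
proof -
  assume a: "is_sq C f g h k" and r: "\<And>P Q P' Q'. T f = Some (P,Q) \<Longrightarrow> T g = Some (P',Q') \<Longrightarrow> T h = Some (P,P') \<Longrightarrow> T k = Some (Q,Q') \<Longrightarrow> g \<cdot> h = k \<cdot> f \<Longrightarrow>
   P \<in> cOb C \<Longrightarrow> Q \<in> cOb C \<Longrightarrow> P' \<in> cOb C \<Longrightarrow> Q' \<in> cOb C \<Longrightarrow> R"
  from sq_T[OF a] obtain P Q P' Q' where o: "T f = Some (P,Q)" "T g = Some (P',Q')" "T h = Some (P,P')" "T k = Some (Q,Q')" "g \<cdot> h = k \<cdot> f"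
    by (elim exE conjE)
  note a1 = ob_T[OF o(1)] and a2 = ob_T[OF o(2)]
  show R using r[of P Q P' Q', OF o a1[THEN conjunct1] a1[THEN conjunct2] a2[THEN conjunct1] a2[THEN conjunct2]] .
qed
end


definition zz :: "('o,'m) cat \<Rightarrow> ('o,'m) ff \<Rightarrow> ('o,'m) ff \<Rightarrow> ('o,'m) ff \<Rightarrow> ('o,'m) ff \<Rightarrow> 'm \<Rightarrow> 'm" where
"zz C A B X Y = (\<lambda>f. let y = flam Y f; r = frho Y f; s = frho X y; g = ccomp C r s; u = flam B g;
   w = ccomp C (flam B r) y; v = frho X w in
   fEm A u v (fEm X y w (cid C (cdom C f)) (flam B r)) (fEm B g r s (cid C (ccod C f))))"

context catx begin

lemma z_typed1:
  assumes "is_ff C A" "is_ff C B" "is_ff C X" "is_ff C Y"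
  shows "is_ff_hom C (ff_tens C (ff_odot C A B) (ff_odot C X Y))
                   (ff_odot C (ff_tens C A X) (ff_tens C B Y)) (zz C A B X Y)"
  unfolding is_ff_hom_def chom_def
  apply (intro conjI ballI allI impI)
  apply (erule arrE, simp add: assms ff_defs zz_def)
  apply (erule arrE, simp add: assms ff_defs zz_def)
  apply (erule arrE, simp add: assms ff_defs zz_def)
  apply (erule sqE, simp add: assms ff_defs zz_def)
  done

end

context catx begin

lemma m_hom: "is_ff_hom C (ff_tens C (ff_bot C) (ff_bot C)) (ff_bot C) (\<lambda>f. ide (cd f))"
  unfolding is_ff_hom_def chom_def
  apply (intro conjI ballI allI impI)
  apply (erule arrE, simp add: ff_defs; fail)+
  apply (erule sqE, simp add: ff_defs)
  done
lemma c_hom: "is_ff_hom C (ff_I C) (ff_odot C (ff_I C) (ff_I C)) (\<lambda>f. ide (dm f))"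
  unfolding is_ff_hom_def chom_def
  apply (intro conjI ballI allI impI)
  apply (erule arrE, simp add: ff_defs; fail)+
  apply (erule sqE, simp add: ff_defs)
  done
lemma j_hom: "is_ff_hom C (ff_I C) (ff_bot C) (\<lambda>f. f)"
  unfolding is_ff_hom_def chom_def
  apply (intro conjI ballI allI impI)
  apply (erule arrE, simp add: ff_defs; fail)+
  apply (erule sqE, simp add: ff_defs)
  done
lemma tm: "tens_monoid C (\<lambda>f. f) (\<lambda>f. ide (cd f))"
  unfolding tens_monoid_def Let_def ff_eq_def 
  apply (intro conjI ballI m_hom j_hom; (erule arrE, simp add: ff_defs))
  done
lemma oc: "odot_comonoid C (\<lambda>f. f) (\<lambda>f. ide (dm f))"
  unfolding odot_comonoid_def Let_def ff_eq_def 
  apply (intro conjI ballI c_hom j_hom; (erule arrE, simp add: ff_defs))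
  done
end

context catx begin

lemma z_nat_f:
  assumes A: "is_ff C A" and B: "is_ff C B" and X: "is_ff C X" and Y: "is_ff C Y"
  and A': "is_ff C A'" and B': "is_ff C B'" and X': "is_ff C X'" and Y': "is_ff C Y'"
  and ha: "is_ff_hom C A A' a" and hb: "is_ff_hom C B B' b"
  and hx: "is_ff_hom C X X' x" and hy: "is_ff_hom C Y Y' y"
  and Tf: "T f = Some (P, Q)" and PQ: "P \<in> cOb C" "Q \<in> cOb C"
  shows "ff_comp C (ff_odot_m C (ff_tens C A X) (ff_tens C B Y) (ff_tens C B' Y')
                       (ff_tens_m C A X X' a x) (ff_tens_m C B Y Y' b y))
                    (zz C A B X Y) f =
         ff_comp C (zz C A' B' X' Y')
                    (ff_tens_m C (ff_odot C A B) (ff_odot C X Y) (ff_odot C X' Y')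
                       (ff_odot_m C A B B' a b) (ff_odot_m C X Y Y' x y)) f"
proof -
  note S = assms PQ hom_simps[OF A A' ha] hom_simps[OF B B' hb] hom_simps[OF X X' hx] hom_simps[OF Y Y' hy]
  define yy where "yy = flam Y f"
  define r where "r = frho Y f"
  define s where "s = frho X yy"
  define g where "g = r \<cdot> s"
  define u where "u = flam B g"
  define w where "w = flam B r \<cdot> yy"
  define v where "v = frho X w"
  define yy' where "yy' = flam Y' f"
  define r' where "r' = frho Y' f"
  define s' where "s' = frho X' yy'"
  define g' where "g' = r' \<cdot> s'"
  define u' where "u' = flam B' g'"
  define w' where "w' = flam B' r' \<cdot> yy'"
  define v' where "v' = frho X' w'"
  define h0 where "h0 = fEm X yy w (ide P) (flam B r)"
  define k0 where "k0 = fEm B g r s (ide Q)"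
  define h0' where "h0' = fEm X' yy' w' (ide P) (flam B' r')"
  define k0' where "k0' = fEm B' g' r' s' (ide Q)"
  define \<beta> where "\<beta> = b r' \<cdot> fEm B r r' (y f) (ide Q)"
  define \<gamma> where "\<gamma> = x yy' \<cdot> fEm X yy yy' (ide P) (y f)"
  note D = yy_def r_def s_def g_def u_def w_def v_def yy'_def r'_def s'_def g'_def u'_def w'_def v'_def
    h0_def k0_def h0'_def k0'_def \<beta>_def \<gamma>_def
  have L0: "ff_comp C (ff_odot_m C (ff_tens C A X) (ff_tens C B Y) (ff_tens C B' Y')
                       (ff_tens_m C A X X' a x) (ff_tens_m C B Y Y' b y))
                    (zz C A B X Y) f = 
     (a v' \<cdot> fEm A (frho X w') v' (x w') (ide (fE B' r'))) \<cdot> fEm A v (frho X w') (fEm X w w' (ide P) \<beta>) \<beta> \<cdot> fEm A u v h0 k0"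
    using Tf S by (simp only: D ff_defs zz_def) (simp)
  have L1: "fEm A (frho X w') v' (x w') (ide (fE B' r')) \<cdot> fEm A v (frho X w') (fEm X w w' (ide P) \<beta>) \<beta> \<cdot> fEm A u v h0 k0
     = fEm A u v' (x w' \<cdot> fEm X w w' (ide P) \<beta> \<cdot> h0) (ide (fE B' r') \<cdot> \<beta> \<cdot> k0)"
    using Tf S by (simp add: D)
  define H1 where "H1 = fEm X' yy w' (ide P) (flam B' r' \<cdot> y f) \<cdot> x yy"
  define K1 where "K1 = fEm B' g r' (y f \<cdot> s) (ide Q) \<cdot> b g"
  have L2: "x w' \<cdot> fEm X w w' (ide P) \<beta> \<cdot> h0 = H1"
    using Tf S by (simp add: D H1_def)
  have L3: "ide (fE B' r') \<cdot> \<beta> \<cdot> k0 = K1"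
    using Tf S by (simp add: D K1_def)
  have L4: "a v' \<cdot> fEm A u v' H1 K1 = fEm A' u v' H1 K1 \<cdot> a u"
    using Tf S by (simp add: D H1_def K1_def)
  define K where "K = b g' \<cdot> fEm B g g' \<gamma> (ide Q)"
  have R0: "ff_comp C (zz C A' B' X' Y')
                    (ff_tens_m C (ff_odot C A B) (ff_odot C X Y) (ff_odot C X' Y')
                       (ff_odot_m C A B B' a b) (ff_odot_m C X Y Y' x y)) f
     = fEm A' u' v' h0' k0' \<cdot> (a u' \<cdot> fEm A (flam B g') u' (ide (fE X' yy')) (b g')) \<cdot>
        fEm A u (flam B g') \<gamma> (fEm B g g' \<gamma> (ide Q))"
    using Tf S by (simp only: D ff_defs zz_def) (simp)
  have R1: "fEm A (flam B g') u' (ide (fE X' yy')) (b g') \<cdot> fEm A u (flam B g') \<gamma> (fEm B g g' \<gamma> (ide Q))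
     = fEm A u u' \<gamma> K"
    using Tf S by (simp add: D K_def)
  have R2: "a u' \<cdot> fEm A u u' \<gamma> K = fEm A' u u' \<gamma> K \<cdot> a u"
    using Tf S by (simp add: D K_def)
  have R3: "fEm A' u' v' h0' k0' \<cdot> fEm A' u u' \<gamma> K = fEm A' u v' (h0' \<cdot> \<gamma>) (k0' \<cdot> K)"
    using Tf S by (simp add: D K_def)
  have R4: "h0' \<cdot> \<gamma> = H1" using Tf S by (simp add: D H1_def)
  have R5: "k0' \<cdot> K = K1" using Tf S by (simp add: D K1_def K_def)
  have LL: "(a v' \<cdot> fEm A (frho X w') v' (x w') (ide (fE B' r'))) \<cdot> fEm A v (frho X w') (fEm X w w' (ide P) \<beta>) \<beta> \<cdot> fEm A u v h0 k0
     = a v' \<cdot> (fEm A (frho X w') v' (x w') (ide (fE B' r')) \<cdot> fEm A v (frho X w') (fEm X w w' (ide P) \<beta>) \<beta> \<cdot> fEm A u v h0 k0)"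
    using Tf S by (simp add: D)
  have RR: "(a u' \<cdot> fEm A (flam B g') u' (ide (fE X' yy')) (b g')) \<cdot> fEm A u (flam B g') \<gamma> (fEm B g g' \<gamma> (ide Q))
     = a u' \<cdot> (fEm A (flam B g') u' (ide (fE X' yy')) (b g') \<cdot> fEm A u (flam B g') \<gamma> (fEm B g g' \<gamma> (ide Q)))"
    using Tf S by (simp add: D)
  have RR2: "fEm A' u' v' h0' k0' \<cdot> (fEm A' u u' \<gamma> K \<cdot> a u) = (fEm A' u' v' h0' k0' \<cdot> fEm A' u u' \<gamma> K) \<cdot> a u"
    using Tf S by (simp add: D K_def)
  show ?thesis
    unfolding L0 R0 LL RR L1 L2 L3 L4 R1 R2 RR2 R3 R4 R5 by (rule refl)
qed

lemma z_nat1: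
  assumes A: "is_ff C A" and B: "is_ff C B" and X: "is_ff C X" and Y: "is_ff C Y"
  and A': "is_ff C A'" and B': "is_ff C B'" and X': "is_ff C X'" and Y': "is_ff C Y'"
  and ha: "is_ff_hom C A A' a" and hb: "is_ff_hom C B B' b"
  and hx: "is_ff_hom C X X' x" and hy: "is_ff_hom C Y Y' y"
  shows "ff_eq C
         (ff_comp C (ff_odot_m C (ff_tens C A X) (ff_tens C B Y) (ff_tens C B' Y')
                       (ff_tens_m C A X X' a x) (ff_tens_m C B Y Y' b y))
                    (zz C A B X Y))
         (ff_comp C (zz C A' B' X' Y')
                    (ff_tens_m C (ff_odot C A B) (ff_odot C X Y) (ff_odot C X' Y')
                       (ff_odot_m C A B B' a b) (ff_odot_m C X Y Y' x y)))"
  unfolding ff_eq_def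
  apply (intro ballI, erule arrE)
  by (rule z_nat_f[OF assms])
end

context catx begin

lemma law3: "is_ff C A \<Longrightarrow> is_ff C B \<Longrightarrow>
      ff_eq C (ff_comp C (zz C A B (ff_I C) (ff_I C)) (ff_tens_m C (ff_odot C A B) (ff_I C) (ff_odot C (ff_I C) (ff_I C)) (ff_id C (ff_odot C A B)) (\<lambda>f. ide (dm f))))
              (ff_id C (ff_tens C (ff_odot C A B) (ff_I C)))"
  unfolding ff_eq_def by (intro ballI, erule arrE) (simp only: ff_defs zz_def, simp)
lemma law4: "is_ff C A \<Longrightarrow> is_ff C B \<Longrightarrow>
      ff_eq C (ff_comp C (zz C (ff_I C) (ff_I C) A B) (ff_tens_m C (ff_I C) (ff_odot C A B) (ff_odot C A B) (\<lambda>f. ide (dm f)) (ff_id C (ff_odot C A B))))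
              (ff_id C (ff_tens C (ff_I C) (ff_odot C A B)))"
  unfolding ff_eq_def by (intro ballI, erule arrE) (simp only: ff_defs zz_def, simp)
lemma law5: "is_ff C A \<Longrightarrow> is_ff C B \<Longrightarrow>
      ff_eq C (ff_comp C (ff_odot_m C (ff_tens C (ff_bot C) (ff_bot C)) (ff_tens C A B) (ff_tens C A B) (\<lambda>f. ide (cd f)) (ff_id C (ff_tens C A B))) (zz C (ff_bot C) A (ff_bot C) B))
              (ff_id C (ff_tens C (ff_odot C (ff_bot C) A) (ff_odot C (ff_bot C) B)))"
  unfolding ff_eq_def by (intro ballI, erule arrE) (simp only: ff_defs zz_def, simp)
lemma law6: "is_ff C A \<Longrightarrow> is_ff C B \<Longrightarrow>
      ff_eq C (ff_comp C (ff_odot_m C (ff_tens C A B) (ff_tens C (ff_bot C) (ff_bot C)) (ff_bot C) (ff_id C (ff_tens C A B)) (\<lambda>f. ide (cd f))) (zz C A (ff_bot C) B (ff_bot C)))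
              (ff_id C (ff_tens C (ff_odot C A (ff_bot C)) (ff_odot C B (ff_bot C))))"
  unfolding ff_eq_def by (intro ballI, erule arrE) (simp only: ff_defs zz_def, simp)
end

context catx begin
lemma law1: "is_ff C A \<Longrightarrow> is_ff C B \<Longrightarrow> is_ff C D \<Longrightarrow> is_ff C A' \<Longrightarrow> is_ff C B' \<Longrightarrow> is_ff C D' \<Longrightarrow>
      ff_eq C
        (ff_comp C (ff_odot_m C (ff_tens C (ff_odot C A B) (ff_odot C A' B')) (ff_tens C D D') (ff_tens C D D') (zz C A B A' B') (ff_id C (ff_tens C D D')))
             (zz C (ff_odot C A B) D (ff_odot C A' B') D'))
        (ff_comp C (ff_odot_m C (ff_tens C A A') (ff_tens C (ff_odot C B D) (ff_odot C B' D')) (ff_odot C (ff_tens C B B') (ff_tens C D D'))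
                 (ff_id C (ff_tens C A A')) (zz C B D B' D'))
             (zz C A (ff_odot C B D) A' (ff_odot C B' D')))"
  unfolding ff_eq_def by (intro ballI, erule arrE) (simp only: ff_defs zz_def, simp)
end

context catx begin
lemma law2: "is_ff C A \<Longrightarrow> is_ff C B \<Longrightarrow> is_ff C D \<Longrightarrow> is_ff C A' \<Longrightarrow> is_ff C B' \<Longrightarrow> is_ff C D' \<Longrightarrow>
      ff_eq C
        (ff_comp C (zz C (ff_tens C A B) (ff_tens C A' B') D D')
             (ff_tens_m C (ff_tens C (ff_odot C A A') (ff_odot C B B')) (ff_odot C D D') (ff_odot C D D') (zz C A A' B B') (ff_id C (ff_odot C D D'))))
        (ff_comp C (zz C A A' (ff_tens C B D) (ff_tens C B' D'))
             (ff_tens_m C (ff_odot C A A') (ff_tens C (ff_odot C B B') (ff_odot C D D')) (ff_odot C (ff_tens C B D) (ff_tens C B' D'))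
                 (ff_id C (ff_odot C A A')) (zz C B B' D D')))"
  unfolding ff_eq_def by (intro ballI, erule arrE) (simp only: ff_defs zz_def, simp)
end

context catx begin
lemma zt: "z_typed C (zz C)"
  unfolding z_typed_def by (intro allI impI z_typed1)
lemma zn: "z_natural C (zz C)"
  unfolding z_natural_def by (intro allI impI z_nat1)
lemma zc: "z_coherent C (\<lambda>f. cid C (ccod C f)) (\<lambda>f. cid C (cdom C f)) (zz C)"
    unfolding z_coherent_def Let_def
    by (intro conjI allI impI law1 law2 law3 law4 law5 law6)
end
theorem proposition3p6:
  fixes C :: "('o, 'm) cat"
  assumes "is_category C"
  shows "\<exists>m c j z.
           is_ff_hom C (ff_tens C (ff_bot C) (ff_bot C)) (ff_bot C) m \<and>
           is_ff_hom C (ff_I C) (ff_odot C (ff_I C) (ff_I C)) c \<and>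
           is_ff_hom C (ff_I C) (ff_bot C) j \<and>
           tens_monoid C j m \<and> odot_comonoid C j c \<and>
           z_typed C z \<and> z_natural C z \<and> z_coherent C m c z"
proof -
  interpret catx C by (unfold_locales) (rule assms)
  show ?thesis
    by (intro exI[of _ "\<lambda>f. cid C (ccod C f)"] exI[of _ "\<lambda>f. cid C (cdom C f)"] exI[of _ "\<lambda>f. f"]
          exI[of _ "zz C"] conjI m_hom c_hom j_hom tm oc zt zn zc)
qed
end
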